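(* Let $G$ be a finite simple connected graph and $H=C(G)$ its cone, obtained by adding a new vertex $w$ and joining every vertex of $G$ to $w$; work in $R=K[x_j: j\in V(H)]$. (i) If $(x_i: i\in V(G))\in\mathrm{Ass}(R/J(G)^t)$ for some $t\ge1$, then $(x_j: j\in V(H))\in\mathrm{Ass}(R/J(H)^{t+1})$. (ii) If $(x_i: i\in V(G))\in\mathrm{Ass}(R/I(G)^t)$ for some $t\geq2$, then $(x_j: j\in V(H))\in\mathrm{Ass}(R/I(H)^t)$.
   Context: For a graph $G$ with vertices indexing variables, the edge ideal is $I(G)=(x_ix_j:\{i,j\}\in E(G))$ and the cover ideal is $J(G)=\bigcap_{\{i,j\}\in E(G)}(x_i,x_j)$ (the Alexander dual of $I(G)$). $K$ is a field. *)

theory Defs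
  imports Main "HOL-Library.Poly_Mapping"
begin

text \<open>Polynomial ring K[x_j : j in 'v]: finitely supported functions from monomials
  (exponent vectors 'v =>0 nat) to coefficients.\<close>
type_synonym ('v, 'k) mpoly = "('v \<Rightarrow>\<^sub>0 nat) \<Rightarrow>\<^sub>0 'k"

definition var :: "'v \<Rightarrow> ('v, 'k::comm_ring_1) mpoly" where
  "var j = Poly_Mapping.single (Poly_Mapping.single j 1) 1"

definition is_ideal :: "'a::comm_ring_1 set \<Rightarrow> bool" where
  "is_ideal I \<longleftrightarrow> 0 \<in> I \<and> (\<forall>a\<in>I. \<forall>b\<in>I. a + b \<in> I) \<and> (\<forall>r. \<forall>a\<in>I. r * a \<in> I)"

definition ideal_gen :: "'a::comm_ring_1 set \<Rightarrow> 'a set" where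
  "ideal_gen S = {x. \<forall>I. is_ideal I \<and> S \<subseteq> I \<longrightarrow> x \<in> I}"

definition ideal_pow :: "'a::comm_ring_1 set \<Rightarrow> nat \<Rightarrow> 'a set" where
  "ideal_pow I t = ideal_gen {prod_list xs | xs. length xs = t \<and> set xs \<subseteq> I}"

definition prime_ideal :: "'a::comm_ring_1 set \<Rightarrow> bool" where
  "prime_ideal P \<longleftrightarrow> is_ideal P \<and> P \<noteq> UNIV \<and> (\<forall>a b. a * b \<in> P \<longrightarrow> a \<in> P \<or> b \<in> P)"

text \<open>Ass(R/I): primes of the form (I : f) = Ann_R(f + I).\<close>
definition Ass :: "'a::comm_ring_1 set \<Rightarrow> 'a set set" where
  "Ass I = {P. prime_ideal P \<and> (\<exists>f. P = {g. g * f \<in> I})}"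

definition simple_graph :: "'v set \<Rightarrow> 'v set set \<Rightarrow> bool" where
  "simple_graph V E \<longleftrightarrow> finite V \<and> (\<forall>e\<in>E. e \<subseteq> V \<and> card e = 2)"

definition connected_graph :: "'v set \<Rightarrow> 'v set set \<Rightarrow> bool" where
  "connected_graph V E \<longleftrightarrow>
     (\<forall>u\<in>V. \<forall>v\<in>V. (u, v) \<in> {(a, b). {a, b} \<in> E}\<^sup>*)"

definition edge_ideal :: "'v set set \<Rightarrow> ('v, 'k::comm_ring_1) mpoly set" where
  "edge_ideal E = ideal_gen {var i * var j | i j. {i, j} \<in> E}"

definition cover_ideal :: "'v set set \<Rightarrow> ('v, 'k::comm_ring_1) mpoly set" where
  "cover_ideal E = (\<Inter>e\<in>E. ideal_gen (var ` e))"

definition var_prime :: "'v set \<Rightarrow> ('v, 'k::comm_ring_1) mpoly set" where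
  "var_prime S = ideal_gen (var ` S)"

text \<open>Cone over G on vertex type 'v: new vertex None, old vertices Some v.\<close>
definition cone_edges :: "'v set \<Rightarrow> 'v set set \<Rightarrow> 'v option set set" where
  "cone_edges V E = ((`) Some) ` E \<union> {{Some v, None} | v. v \<in> V}"

end

theory Submission
  imports Defs
begin

lemma ideal_gen_is_ideal: "is_ideal (ideal_gen S)"
  unfolding is_ideal_def ideal_gen_def by auto

lemma ideal_gen_sub: "S \<subseteq> ideal_gen S"
  unfolding ideal_gen_def by auto

lemma ideal_gen_least: "is_ideal I \<Longrightarrow> S \<subseteq> I \<Longrightarrow> ideal_gen S \<subseteq> I"
  unfolding ideal_gen_def by auto

lemma ideal_mult_right: "is_ideal I \<Longrightarrow> a \<in> I \<Longrightarrow> a * r \<in> I"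
  unfolding is_ideal_def by (metis mult.commute)

lemma ideal_mult_left: "is_ideal I \<Longrightarrow> a \<in> I \<Longrightarrow> r * a \<in> I"
  unfolding is_ideal_def by auto

lemma ideal_add: "is_ideal I \<Longrightarrow> a \<in> I \<Longrightarrow> b \<in> I \<Longrightarrow> a + b \<in> I"
  unfolding is_ideal_def by auto

lemma ideal_diff: "is_ideal I \<Longrightarrow> a \<in> I \<Longrightarrow> b \<in> I \<Longrightarrow> a - b \<in> I"
  using ideal_add[of I a "(-1) * b"] ideal_mult_left[of I b "-1"] by simp

lemma gen_mult: "a \<in> ideal_gen S \<Longrightarrow> r * a \<in> ideal_gen S"
  by (rule ideal_mult_left[OF ideal_gen_is_ideal])

lemma gen_add: "a \<in> ideal_gen S \<Longrightarrow> b \<in> ideal_gen S \<Longrightarrow> a + b \<in> ideal_gen S"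
  by (rule ideal_add[OF ideal_gen_is_ideal])

lemma lookup_single_mult:
  "Poly_Mapping.lookup (Poly_Mapping.single a c * f) ((a::'v \<Rightarrow>\<^sub>0 nat) + m) = (c::'b::comm_semiring_1) * Poly_Mapping.lookup f m"
proof -
  have "Poly_Mapping.lookup (Poly_Mapping.single a c * f) (a + m) =
     (\<Sum>l. (c when a = l) * (\<Sum>q. Poly_Mapping.lookup f q when a + m = l + q))"
    by (simp add: lookup_mult lookup_single)
  also have "\<dots> = (\<Sum>l. (c * (\<Sum>q. Poly_Mapping.lookup f q when a + m = l + q)) when a = l)"
    by (simp add: when_mult)
  also have "\<dots> = c * (\<Sum>q. Poly_Mapping.lookup f q when a + m = a + q)"
    by simp
  also have "(\<Sum>q. Poly_Mapping.lookup f q when a + m = a + q) = (\<Sum>q. Poly_Mapping.lookup f q when m = q)"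
    by simp
  also have "\<dots> = Poly_Mapping.lookup f m" by simp
  finally show ?thesis .
qed

definition le_pm :: "('a \<Rightarrow>\<^sub>0 nat) \<Rightarrow> ('a \<Rightarrow>\<^sub>0 nat) \<Rightarrow> bool" where
  "le_pm a m \<longleftrightarrow> (\<forall>x. Poly_Mapping.lookup a x \<le> Poly_Mapping.lookup m x)"

definition MI :: "('a \<Rightarrow>\<^sub>0 nat) set \<Rightarrow> ('a, 'k::field) mpoly set" where
  "MI M = {p. \<forall>m\<in>Poly_Mapping.keys p. \<exists>a\<in>M. le_pm a m}"

definition mnm :: "('a \<Rightarrow>\<^sub>0 nat) \<Rightarrow> ('a, 'k::field) mpoly" where
  "mnm m = Poly_Mapping.single m 1"

lemma le_pm_add_left: "le_pm a m \<Longrightarrow> le_pm a (x + m)"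
  unfolding le_pm_def by (simp add: lookup_add) (meson le_add2 order_trans)

lemma le_pm_add: "le_pm a m \<Longrightarrow> le_pm b n \<Longrightarrow> le_pm (a + b) (m + n)"
  unfolding le_pm_def by (simp add: lookup_add add_mono)

lemma le_pm_refl: "le_pm a a"
  unfolding le_pm_def by simp

lemma le_pm_trans: "le_pm a b \<Longrightarrow> le_pm b c \<Longrightarrow> le_pm a c"
  unfolding le_pm_def using order_trans by blast

lemma MI_ideal: "is_ideal (MI M :: ('a, 'k::field) mpoly set)"
  unfolding is_ideal_def
proof (intro conjI ballI allI)
  show "0 \<in> MI M" by (simp add: MI_def)
next
  fix a b :: "('a, 'k) mpoly" assume "a \<in> MI M" "b \<in> MI M"
  then show "a + b \<in> MI M" unfolding MI_def using keys_add[of a b] by blast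
next
  fix r a :: "('a, 'k) mpoly" assume a: "a \<in> MI M"
  show "r * a \<in> MI M" unfolding MI_def mem_Collect_eq
  proof
    fix m assume "m \<in> Poly_Mapping.keys (r * a)"
    then obtain x y where "m = x + y" "y \<in> Poly_Mapping.keys a" using keys_mult by blast
    with a show "\<exists>c\<in>M. le_pm c m" unfolding MI_def using le_pm_add_left by blast
  qed
qed

lemma keys_mono [simp]: "Poly_Mapping.keys (mnm m :: ('a, 'k::field) mpoly) = {m}"
  by (simp add: mnm_def)

lemma mono_in_MI: "m \<in> M \<Longrightarrow> (mnm m :: ('a, 'k::field) mpoly) \<in> MI M"
  unfolding MI_def using le_pm_refl by auto

lemma mono_add: "(mnm (a + b) :: ('a, 'k::field) mpoly) = mnm a * mnm b"
  by (simp add: mnm_def mult_single)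

lemma le_pm_diff: "le_pm c a \<Longrightarrow> (a - c) + c = a"
  by (rule poly_mapping_eqI) (simp add: le_pm_def lookup_add minus_poly_mapping.rep_eq)

lemma update_eq_add: "k \<notin> Poly_Mapping.keys f \<Longrightarrow> Poly_Mapping.update k b f = f + Poly_Mapping.single k b"
  by (rule poly_mapping_eqI) (auto simp: lookup_update lookup_add lookup_single in_keys_iff)

lemma MI_sub_gen: "MI M \<subseteq> ideal_gen (mnm ` M :: ('a, 'k::field) mpoly set)"
proof
  fix p :: "('a, 'k) mpoly"
  show "p \<in> MI M \<Longrightarrow> p \<in> ideal_gen (mnm ` M)"
  proof (induction p rule: update_induct)
    case const then show ?case using ideal_gen_is_ideal[of "mnm ` M :: ('a, 'k) mpoly set"] unfolding is_ideal_def by simp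
  next
    case (update f a b)
    have eq: "Poly_Mapping.update a b f = f + Poly_Mapping.single a b"
      by (rule update_eq_add[OF update.hyps(1)])
    have keys: "Poly_Mapping.keys (Poly_Mapping.update a b f) = insert a (Poly_Mapping.keys f)"
      using update.hyps(2) by (simp add: keys_update)
    have "f \<in> MI M" using update.prems by (simp add: MI_def keys)
    then have f: "f \<in> ideal_gen (mnm ` M)" by (rule update.IH)
    obtain c where c: "c \<in> M" "le_pm c a" using update.prems by (auto simp add: MI_def keys)
    have "Poly_Mapping.single a b = Poly_Mapping.single (a - c) b * mnm c"
      unfolding mnm_def mult_single le_pm_diff[OF c(2)] by simp
    moreover have "mnm c \<in> ideal_gen (mnm ` M)" using c(1) ideal_gen_sub by blast
    ultimately have "Poly_Mapping.single a b \<in> ideal_gen (mnm ` M)"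
      using gen_mult[of "mnm c" "mnm ` M" "Poly_Mapping.single (a - c) b"] by simp
    then show ?case unfolding eq by (rule gen_add[OF f])
  qed
qed

lemma gen_mono_eq: "ideal_gen (mnm ` M :: ('a, 'k::field) mpoly set) = MI M"
proof
  show "ideal_gen (mnm ` M) \<subseteq> MI M"
    by (rule ideal_gen_least[OF MI_ideal]) (rule image_subsetI, rule mono_in_MI)
qed (rule MI_sub_gen)

definition sumsT :: "('a \<Rightarrow>\<^sub>0 nat) set \<Rightarrow> nat \<Rightarrow> ('a \<Rightarrow>\<^sub>0 nat) set" where
  "sumsT M t = {sum_list as | as. length as = t \<and> set as \<subseteq> M}"

lemma prod_list_MI:
  "set xs \<subseteq> (MI M :: ('a, 'k::field) mpoly set) \<Longrightarrow> prod_list xs \<in> MI (sumsT M (length xs))"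
proof (induction xs)
  case Nil
  have "(0::'a \<Rightarrow>\<^sub>0 nat) \<in> sumsT M 0" unfolding sumsT_def by force
  then show ?case unfolding MI_def using le_pm_refl by auto
next
  case (Cons x xs)
  then have x: "x \<in> MI M" and IH: "prod_list xs \<in> MI (sumsT M (length xs))" by auto
  show ?case unfolding MI_def mem_Collect_eq
  proof
    fix m assume "m \<in> Poly_Mapping.keys (prod_list (x # xs))"
    then obtain a b where ab: "m = a + b" "a \<in> Poly_Mapping.keys x" "b \<in> Poly_Mapping.keys (prod_list xs)"
      using keys_mult[of x "prod_list xs"] by auto
    obtain c where c: "c \<in> M" "le_pm c a" using x ab unfolding MI_def by blast
    obtain d where d: "d \<in> sumsT M (length xs)" "le_pm d b" using IH ab unfolding MI_def by blast
    then obtain as where as: "d = sum_list as" "length as = length xs" "set as \<subseteq> M"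
      unfolding sumsT_def by blast
    have "c + d \<in> sumsT M (length (x # xs))" unfolding sumsT_def
      using as c by (intro CollectI exI[of _ "c # as"]) auto
    moreover have "le_pm (c + d) m" using ab c d le_pm_add by blast
    ultimately show "\<exists>e\<in>sumsT M (length (x # xs)). le_pm e m" by (rule bexI[rotated])
  qed
qed

lemma mono_sum_list: "(mnm (sum_list as) :: ('a, 'k::field) mpoly) = prod_list (map mnm as)"
proof (induction as)
  case Nil
  have "(mnm 0 :: ('a, 'k) mpoly) = 1"
    by (rule poly_mapping_eqI) (simp add: mnm_def lookup_single lookup_one when_def)
  then show ?case by simp
next
  case (Cons a as)
  then show ?case by (simp add: mono_add)
qed

lemma ideal_pow_MI: "ideal_pow (MI M :: ('a, 'k::field) mpoly set) t = MI (sumsT M t)"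
proof
  show "ideal_pow (MI M :: ('a, 'k) mpoly set) t \<subseteq> MI (sumsT M t)"
    unfolding ideal_pow_def
  proof (rule ideal_gen_least[OF MI_ideal], rule subsetI)
    fix y assume "y \<in> {prod_list xs |xs. length xs = t \<and> set xs \<subseteq> (MI M :: ('a, 'k) mpoly set)}"
    then obtain xs where "y = prod_list xs" "length xs = t" "set xs \<subseteq> (MI M :: ('a, 'k) mpoly set)" by blast
    then show "y \<in> MI (sumsT M t)" using prod_list_MI[of xs M] by simp
  qed
next
  let ?G = "{prod_list xs | xs. length xs = t \<and> set xs \<subseteq> (MI M :: ('a, 'k) mpoly set)}"
  have sub: "mnm ` sumsT M t \<subseteq> ?G"
  proof
    fix y :: "('a, 'k) mpoly" assume "y \<in> mnm ` sumsT M t"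
    then obtain d where d: "d \<in> sumsT M t" "y = mnm d" by blast
    then obtain as where as: "d = sum_list as" "length as = t" "set as \<subseteq> M"
      unfolding sumsT_def mem_Collect_eq by metis
    have s: "set (map mnm as) \<subseteq> (MI M :: ('a, 'k) mpoly set)"
    proof
      fix z :: "('a, 'k) mpoly" assume "z \<in> set (map mnm as)"
      then obtain e where "e \<in> set as" "z = mnm e" by auto
      then show "z \<in> (MI M :: ('a, 'k) mpoly set)" using as(3) mono_in_MI[of e M] by auto
    qed
    have "y = prod_list (map mnm as)" using as(1) d(2) mono_sum_list by simp
    moreover have "length (map mnm as) = t" using as(2) by simp
    ultimately show "y \<in> ?G" using s by (intro CollectI exI[of _ "map mnm as"]) simp
  qed
  have "ideal_gen (mnm ` sumsT M t) \<subseteq> ideal_gen ?G"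
    by (rule ideal_gen_least[OF ideal_gen_is_ideal]) (rule subset_trans[OF sub ideal_gen_sub])
  then show "MI (sumsT M t) \<subseteq> ideal_pow (MI M :: ('a, 'k) mpoly set) t"
    unfolding ideal_pow_def gen_mono_eq .
qed


lemma var_mono: "(var j :: ('a, 'k::field) mpoly) = mnm (Poly_Mapping.single j 1)"
  by (simp add: var_def mnm_def)

lemma le_pm_single: "le_pm (Poly_Mapping.single v 1) m \<longleftrightarrow> 1 \<le> Poly_Mapping.lookup m v"
proof
  assume "le_pm (Poly_Mapping.single v 1) m"
  then show "1 \<le> Poly_Mapping.lookup m v" unfolding le_pm_def by (metis lookup_single_eq)
next
  assume a: "1 \<le> Poly_Mapping.lookup m v"
  show "le_pm (Poly_Mapping.single v 1) m" unfolding le_pm_def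
  proof
    fix x show "Poly_Mapping.lookup (Poly_Mapping.single v 1) x \<le> Poly_Mapping.lookup m x"
      using a by (cases "x = v") (simp_all add: lookup_single_not_eq)
  qed
qed

definition edgeM :: "'a set set \<Rightarrow> ('a \<Rightarrow>\<^sub>0 nat) set" where
  "edgeM E' = {Poly_Mapping.single i 1 + Poly_Mapping.single j 1 | i j. {i, j} \<in> E'}"

definition covM :: "'a set set \<Rightarrow> ('a \<Rightarrow>\<^sub>0 nat) set" where
  "covM E' = {c. \<forall>e\<in>E'. \<exists>v\<in>e. 1 \<le> Poly_Mapping.lookup c v}"

definition singM :: "'a set \<Rightarrow> ('a \<Rightarrow>\<^sub>0 nat) set" where
  "singM S = {Poly_Mapping.single v 1 | v. v \<in> S}"

lemma edge_ideal_MI: "(edge_ideal E' :: ('a, 'k::field) mpoly set) = MI (edgeM E')"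
proof -
  have "{var i * var j | i j. {i, j} \<in> E'} = (mnm ` edgeM E' :: ('a, 'k) mpoly set)"
    unfolding edgeM_def var_mono mono_add[symmetric] image_def by auto
  then show ?thesis unfolding edge_ideal_def by (simp add: gen_mono_eq)
qed

lemma var_prime_MI: "(var_prime S :: ('a, 'k::field) mpoly set) = MI (singM S)"
proof -
  have "var ` S = (mnm ` singM S :: ('a, 'k) mpoly set)"
    unfolding singM_def var_mono image_def by auto
  then show ?thesis unfolding var_prime_def by (simp add: gen_mono_eq)
qed

lemma MI_singM: "p \<in> MI (singM S) \<longleftrightarrow> (\<forall>m\<in>Poly_Mapping.keys p. \<exists>v\<in>S. 1 \<le> Poly_Mapping.lookup m v)"
proof -
  have eq: "(\<exists>a\<in>singM S. le_pm a m) \<longleftrightarrow> (\<exists>v\<in>S. 1 \<le> Poly_Mapping.lookup m v)" for m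
  proof
    assume "\<exists>a\<in>singM S. le_pm a m"
    then obtain a where a: "a \<in> singM S" "le_pm a m" by (rule bexE)
    from a(1) obtain v where v: "a = Poly_Mapping.single v 1" "v \<in> S" unfolding singM_def by auto
    show "\<exists>v\<in>S. 1 \<le> Poly_Mapping.lookup m v"
      using v a(2) le_pm_single[of v m] by auto
  next
    assume "\<exists>v\<in>S. 1 \<le> Poly_Mapping.lookup m v"
    then obtain v where v: "v \<in> S" "1 \<le> Poly_Mapping.lookup m v" by (rule bexE)
    have "Poly_Mapping.single v 1 \<in> singM S" unfolding singM_def using v(1) by auto
    moreover have "le_pm (Poly_Mapping.single v 1) m" by (rule le_pm_single[THEN iffD2, OF v(2)])
    ultimately show "\<exists>a\<in>singM S. le_pm a m" by (rule bexI[rotated])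
  qed
  show ?thesis unfolding MI_def mem_Collect_eq eq ..
qed

lemma cover_ideal_MI: "(cover_ideal E' :: ('a, 'k::field) mpoly set) = MI (covM E')"
proof -
  have "ideal_gen (var ` e) = (MI (singM e) :: ('a, 'k) mpoly set)" for e
    using var_prime_MI[of e] unfolding var_prime_def .
  then have "cover_ideal E' = (\<Inter>e\<in>E'. MI (singM e) :: ('a, 'k) mpoly set)"
    unfolding cover_ideal_def by simp
  also have "\<dots> = MI (covM E')"
  proof (rule set_eqI)
    fix p :: "('a, 'k) mpoly"
    have "p \<in> (\<Inter>e\<in>E'. MI (singM e)) \<longleftrightarrow> (\<forall>m\<in>Poly_Mapping.keys p. m \<in> covM E')"
      by (auto simp: MI_singM covM_def)
    also have "\<dots> \<longleftrightarrow> p \<in> MI (covM E')"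
    proof
      assume "\<forall>m\<in>Poly_Mapping.keys p. m \<in> covM E'"
      then show "p \<in> MI (covM E')" unfolding MI_def using le_pm_refl by blast
    next
      assume "p \<in> MI (covM E')"
      show "\<forall>m\<in>Poly_Mapping.keys p. m \<in> covM E'"
      proof
        fix m assume "m \<in> Poly_Mapping.keys p"
        then obtain a where a: "a \<in> covM E'" "le_pm a m" using \<open>p \<in> MI (covM E')\<close> unfolding MI_def by blast
        show "m \<in> covM E'" unfolding covM_def mem_Collect_eq
        proof
          fix e assume "e \<in> E'"
          then obtain v where "v \<in> e" "1 \<le> Poly_Mapping.lookup a v" using a(1) unfolding covM_def by blast
          then show "\<exists>v\<in>e. 1 \<le> Poly_Mapping.lookup m v" using a(2) unfolding le_pm_def using order_trans by blast
        qed
      qed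
    qed
    finally show "p \<in> (\<Inter>e\<in>E'. MI (singM e)) \<longleftrightarrow> p \<in> MI (covM E')" .
  qed
  finally show ?thesis .
qed


lemma pm_add_eq_0: "(l::'a \<Rightarrow>\<^sub>0 nat) + q = 0 \<longleftrightarrow> l = 0 \<and> q = 0"
proof
  assume h: "l + q = 0"
  have "Poly_Mapping.lookup l x = 0 \<and> Poly_Mapping.lookup q x = 0" for x
    using arg_cong[OF h, of "\<lambda>p. Poly_Mapping.lookup p x"] by (simp add: lookup_add)
  then show "l = 0 \<and> q = 0" by (auto intro: poly_mapping_eqI)
qed simp

lemma lookup_mult_zero:
  "Poly_Mapping.lookup (a * b) 0 = Poly_Mapping.lookup a 0 * Poly_Mapping.lookup (b::('a, 'k::field) mpoly) 0"
proof -
  have inner: "(\<Sum>q. Poly_Mapping.lookup b q when 0 = l + q) = (Poly_Mapping.lookup b 0 when l = 0)" for l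
  proof (cases "l = 0")
    case True
    then show ?thesis by simp
  next
    case False
    then have z: "(\<lambda>q. Poly_Mapping.lookup b q when 0 = l + q) = (\<lambda>q. 0)"
      using pm_add_eq_0[of l] by (auto simp: when_def)
    show ?thesis unfolding z using False by simp
  qed
  have "Poly_Mapping.lookup (a * b) 0 = (\<Sum>l. Poly_Mapping.lookup a l * (Poly_Mapping.lookup b 0 when l = 0))"
    by (simp only: lookup_mult inner)
  also have "\<dots> = (\<Sum>l. (Poly_Mapping.lookup a l * Poly_Mapping.lookup b 0) when l = 0)"
    by (simp add: mult_when)
  also have "\<dots> = Poly_Mapping.lookup a 0 * Poly_Mapping.lookup b 0" by simp
  finally show ?thesis .
qed

lemma var_prime_UNIV: "(var_prime UNIV :: ('a, 'k::field) mpoly set) = {p. Poly_Mapping.lookup p 0 = 0}"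
proof (rule set_eqI)
  fix p :: "('a, 'k) mpoly"
  have "(\<forall>m\<in>Poly_Mapping.keys p. \<exists>v\<in>UNIV. 1 \<le> Poly_Mapping.lookup m v) \<longleftrightarrow> Poly_Mapping.lookup p 0 = 0"
  proof
    assume h: "\<forall>m\<in>Poly_Mapping.keys p. \<exists>v\<in>UNIV. 1 \<le> Poly_Mapping.lookup m v"
    show "Poly_Mapping.lookup p 0 = 0"
    proof (rule ccontr)
      assume "Poly_Mapping.lookup p 0 \<noteq> 0"
      then have "0 \<in> Poly_Mapping.keys p" by (simp add: in_keys_iff)
      then show False using h by auto
    qed
  next
    assume h: "Poly_Mapping.lookup p 0 = 0"
    show "\<forall>m\<in>Poly_Mapping.keys p. \<exists>v\<in>UNIV. 1 \<le> Poly_Mapping.lookup m v"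
    proof
      fix m assume "m \<in> Poly_Mapping.keys p"
      then have "m \<noteq> 0" using h by (auto simp: in_keys_iff)
      then obtain v where "Poly_Mapping.lookup m v \<noteq> 0"
        using poly_mapping_eqI[of m 0] by auto
      then have "1 \<le> Poly_Mapping.lookup m v" by simp
      then show "\<exists>v\<in>UNIV. 1 \<le> Poly_Mapping.lookup m v" by blast
    qed
  qed
  then show "p \<in> var_prime UNIV \<longleftrightarrow> p \<in> {p. Poly_Mapping.lookup p 0 = 0}"
    unfolding var_prime_MI MI_singM by simp
qed

lemma prime_var_prime_UNIV: "prime_ideal (var_prime UNIV :: ('a, 'k::field) mpoly set)"
  unfolding prime_ideal_def
proof (intro conjI allI impI)
  show "is_ideal (var_prime UNIV :: ('a, 'k) mpoly set)" unfolding var_prime_MI by (rule MI_ideal)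
  show "(var_prime UNIV :: ('a, 'k) mpoly set) \<noteq> UNIV"
  proof
    assume "(var_prime UNIV :: ('a, 'k) mpoly set) = UNIV"
    then have "(1 :: ('a, 'k) mpoly) \<in> var_prime UNIV" by simp
    then show False unfolding var_prime_UNIV by simp
  qed
  fix a b :: "('a, 'k) mpoly"
  assume "a * b \<in> var_prime UNIV"
  then show "a \<in> var_prime UNIV \<or> b \<in> var_prime UNIV"
    unfolding var_prime_UNIV by (simp add: lookup_mult_zero)
qed

lemma colon_ideal: assumes I: "is_ideal I" shows "is_ideal {h. h * g \<in> I}"
  unfolding is_ideal_def
proof (intro conjI ballI allI)
  show "0 \<in> {h. h * g \<in> I}" using I unfolding is_ideal_def by simp
next
  fix a b assume "a \<in> {h. h * g \<in> I}" "b \<in> {h. h * g \<in> I}"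
  then show "a + b \<in> {h. h * g \<in> I}" using ideal_add[OF I] by (simp add: distrib_right)
next
  fix r a assume "a \<in> {h. h * g \<in> I}"
  then show "r * a \<in> {h. h * g \<in> I}" using ideal_mult_left[OF I, of "a * g" r] by (simp add: mult.assoc)
qed

lemma colon_max:
  fixes g :: "('a, 'k::field) mpoly"
  assumes I: "is_ideal I" and g: "g \<notin> I" and v: "\<And>x. var x * g \<in> I"
  shows "var_prime UNIV = {h. h * g \<in> I}"
proof -
  have sub: "var_prime UNIV \<subseteq> {h. h * g \<in> I}"
    unfolding var_prime_def
  proof (rule ideal_gen_least[OF colon_ideal[OF I]])
    show "range var \<subseteq> {h. h * g \<in> I}" using v by blast
  qed
  have "{h. h * g \<in> I} \<subseteq> var_prime UNIV"
  proof
    fix h assume "h \<in> {h. h * g \<in> I}"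
    then have hg: "h * g \<in> I" by simp
    define c where "c = Poly_Mapping.lookup h 0"
    define d where "d = h - Poly_Mapping.single 0 c"
    have "Poly_Mapping.lookup d 0 = 0" unfolding d_def c_def by (simp add: lookup_minus)
    then have "d \<in> var_prime UNIV" unfolding var_prime_UNIV by simp
    then have "d * g \<in> I" using sub by blast
    then have cg: "Poly_Mapping.single 0 c * g \<in> I"
      using ideal_diff[OF I hg \<open>d * g \<in> I\<close>] unfolding d_def by (simp add: left_diff_distrib)
    have "c = 0"
    proof (rule ccontr)
      assume "c \<noteq> 0"
      have "Poly_Mapping.single 0 (inverse c) * (Poly_Mapping.single 0 c * g) = g"
        using \<open>c \<noteq> 0\<close> by (simp add: mult.assoc[symmetric] mult_single)
      then have "g \<in> I" using ideal_mult_left[OF I cg, of "Poly_Mapping.single 0 (inverse c)"] by simp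
      then show False using g by simp
    qed
    then show "h \<in> var_prime UNIV" unfolding var_prime_UNIV c_def by simp
  qed
  with sub show ?thesis by (rule equalityI)
qed

lemma ass_intro:
  fixes g :: "('a, 'k::field) mpoly"
  assumes "is_ideal I" "g \<notin> I" "\<And>x. var x * g \<in> I"
  shows "var_prime UNIV \<in> Ass I"
  unfolding Ass_def mem_Collect_eq using prime_var_prime_UNIV colon_max[OF assms] by (intro conjI exI)

definition domin :: "('a \<Rightarrow>\<^sub>0 nat) set \<Rightarrow> ('a \<Rightarrow>\<^sub>0 nat) \<Rightarrow> bool" where
  "domin T m \<longleftrightarrow> (\<exists>a\<in>T. le_pm a m)"

lemma mono_MI_iff: "(mnm u :: ('a, 'k::field) mpoly) \<in> MI T \<longleftrightarrow> domin T u"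
  unfolding MI_def domin_def by simp

lemma ass_intro_MI:
  assumes "\<not> domin T u" "\<And>x. domin T (Poly_Mapping.single x 1 + u)"
  shows "(var_prime UNIV :: ('a, 'k::field) mpoly set) \<in> Ass (MI T)"
proof (rule ass_intro[OF MI_ideal])
  show "(mnm u :: ('a, 'k) mpoly) \<notin> MI T" using assms(1) mono_MI_iff by blast
  fix x
  show "var x * (mnm u :: ('a, 'k) mpoly) \<in> MI T"
    unfolding var_mono mono_add[symmetric] mono_MI_iff by (rule assms(2))
qed

lemma ass_extract:
  assumes "(var_prime (range Some) :: ('v option, 'k::field) mpoly set) \<in> Ass (MI T)"
  shows "\<exists>u. \<not> domin T u \<and> (\<forall>i. domin T (Poly_Mapping.single (Some i) 1 + u))"
proof -
  have "\<exists>f :: ('v option, 'k) mpoly. var_prime (range Some) = {g. g * f \<in> MI T}"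
    using assms unfolding Ass_def by simp
  then obtain f :: "('v option, 'k) mpoly" where eq: "var_prime (range Some) = {g. g * f \<in> MI T}"
    by (rule exE)
  have "(1 :: ('v option, 'k) mpoly) \<notin> var_prime (range Some)"
    unfolding var_prime_MI MI_singM by simp
  have "f \<notin> MI T"
  proof
    assume "f \<in> MI T"
    then have "(1 :: ('v option, 'k) mpoly) \<in> {g. g * f \<in> MI T}" by simp
    then show False using eq \<open>(1 :: ('v option, 'k) mpoly) \<notin> var_prime (range Some)\<close> by simp
  qed
  then have "\<not> (\<forall>m\<in>Poly_Mapping.keys f. domin T m)" unfolding MI_def domin_def by simp
  then obtain u where u: "u \<in> Poly_Mapping.keys f" "\<not> domin T u" by blast
  have "domin T (Poly_Mapping.single (Some i) 1 + u)" for i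
  proof -
    have "var (Some i) \<in> (var_prime (range Some) :: ('v option, 'k) mpoly set)"
      unfolding var_prime_def by (rule subsetD[OF ideal_gen_sub]) simp
    then have "var (Some i) * f \<in> MI T" using eq by simp
    moreover have "Poly_Mapping.single (Some i) 1 + u \<in> Poly_Mapping.keys (var (Some i) * f)"
      using u(1) by (simp add: var_def lookup_single_mult in_keys_iff)
    ultimately show ?thesis unfolding MI_def domin_def mem_Collect_eq by (rule bspec)
  qed
  then show ?thesis using u(2) by blast
qed


lemma lookup_single': "Poly_Mapping.lookup (Poly_Mapping.single k v) x = (if k = x then v else 0)"
  by (simp add: lookup_single when_def)

lemma lookup_sum_list: "Poly_Mapping.lookup (sum_list as) x = (\<Sum>a\<leftarrow>as. Poly_Mapping.lookup a x)"
  by (induction as) (simp_all add: lookup_add)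

lemma lookup_sum_list_remove1:
  assumes "d \<in> set (ds :: ('a \<Rightarrow>\<^sub>0 nat) list)"
  shows "Poly_Mapping.lookup (sum_list ds) x =
     Poly_Mapping.lookup d x + Poly_Mapping.lookup (sum_list (remove1 d ds)) x"
  unfolding lookup_sum_list using sum_list_map_remove1[OF assms, of "\<lambda>a. Poly_Mapping.lookup a x"] by simp

lemma elem_le_sum: "d \<in> set ds \<Longrightarrow> Poly_Mapping.lookup d x \<le> Poly_Mapping.lookup (sum_list (ds :: ('a \<Rightarrow>\<^sub>0 nat) list)) x"
  using lookup_sum_list_remove1[of d ds x] by simp

lemma domin_mono: "domin T a \<Longrightarrow> le_pm a b \<Longrightarrow> domin T b"
  unfolding domin_def using le_pm_trans by blast

lemma domin_sumsT:
  "domin (sumsT M t) m \<longleftrightarrow> (\<exists>as. length as = t \<and> set as \<subseteq> M \<and> le_pm (sum_list as) m)"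
proof
  assume "domin (sumsT M t) m"
  then obtain a where a: "a \<in> sumsT M t" "le_pm a m" unfolding domin_def by (rule bexE)
  from a(1) obtain as where "a = sum_list as" "length as = t" "set as \<subseteq> M"
    unfolding sumsT_def mem_Collect_eq by metis
  then show "\<exists>as. length as = t \<and> set as \<subseteq> M \<and> le_pm (sum_list as) m" using a(2) by blast
next
  assume "\<exists>as. length as = t \<and> set as \<subseteq> M \<and> le_pm (sum_list as) m"
  then obtain as where as: "length as = t" "set as \<subseteq> M" "le_pm (sum_list as) m" by blast
  have "sum_list as \<in> sumsT M t" unfolding sumsT_def mem_Collect_eq using as(1,2) by blast
  then show "domin (sumsT M t) m" unfolding domin_def using as(3) by (rule bexI[rotated])
qed

definition stripN :: "('v option \<Rightarrow>\<^sub>0 nat) \<Rightarrow> ('v option \<Rightarrow>\<^sub>0 nat)" where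
  "stripN m = Poly_Mapping.update None 0 m"

lemma lookup_strip: "Poly_Mapping.lookup (stripN m) x = (if x = None then 0 else Poly_Mapping.lookup m x)"
  unfolding stripN_def by (simp add: lookup_update)

lemma le_pm_strip: "le_pm (stripN m) m"
  unfolding le_pm_def lookup_strip by simp

lemma le_pm_into_strip: "le_pm a m \<Longrightarrow> Poly_Mapping.lookup a None = 0 \<Longrightarrow> le_pm a (stripN m)"
  unfolding le_pm_def lookup_strip by simp

subsection \<open>Edge ideal combinatorics\<close>

lemma edgeG_None:
  assumes "c \<in> edgeM (((`) Some) ` E)"
  shows "Poly_Mapping.lookup c None = 0"
proof -
  obtain i j where ij: "c = Poly_Mapping.single i 1 + Poly_Mapping.single j 1" "{i, j} \<in> ((`) Some) ` E"
    using assms unfolding edgeM_def mem_Collect_eq by metis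
  then obtain e where "{i, j} = Some ` e" by blast
  then have "i \<noteq> None" "j \<noteq> None" by (metis image_iff insertI1 insert_commute option.distinct(1))+
  then show ?thesis using ij(1) by (simp add: lookup_add lookup_single')
qed

lemma edgeG_sub_H: "edgeM (((`) Some) ` E) \<subseteq> edgeM (cone_edges UNIV E)"
proof
  fix c assume "c \<in> edgeM (((`) Some) ` E)"
  then obtain i j where ij: "c = Poly_Mapping.single i 1 + Poly_Mapping.single j 1" "{i, j} \<in> ((`) Some) ` E"
    unfolding edgeM_def mem_Collect_eq by metis
  have "{i, j} \<in> cone_edges UNIV E" unfolding cone_edges_def by (rule UnI1[OF ij(2)])
  then show "c \<in> edgeM (cone_edges UNIV E)" unfolding edgeM_def mem_Collect_eq using ij(1) by blast
qed

lemma edgeH_None: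
  assumes "c \<in> edgeM (cone_edges UNIV E)" "Poly_Mapping.lookup c None = 0"
  shows "c \<in> edgeM (((`) Some) ` E)"
proof -
  obtain i j where ij: "c = Poly_Mapping.single i 1 + Poly_Mapping.single j 1" "{i, j} \<in> cone_edges UNIV E"
    using assms(1) unfolding edgeM_def mem_Collect_eq by metis
  have "i \<noteq> None \<and> j \<noteq> None"
  proof (intro conjI notI)
    assume "i = None" then show False using assms(2) ij(1) by (simp add: lookup_add lookup_single')
  next
    assume "j = None" then show False using assms(2) ij(1) by (simp add: lookup_add lookup_single')
  qed
  have "{i, j} \<notin> {{Some v, None} | v. v \<in> UNIV}"
  proof
    assume "{i, j} \<in> {{Some v, None} | v. v \<in> UNIV}"
    then obtain v where "{i, j} = {Some v, None}" by blast
    then have "None \<in> {i, j}" by simp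
    then have "i = None \<or> j = None" by blast
    then show False using \<open>i \<noteq> None \<and> j \<noteq> None\<close> by blast
  qed
  then have "{i, j} \<in> ((`) Some) ` E" using ij(2) unfolding cone_edges_def by blast
  then show ?thesis unfolding edgeM_def mem_Collect_eq using ij(1) by blast
qed

lemma edgeG_at:
  assumes "c \<in> edgeM (((`) Some) ` E)" "Poly_Mapping.lookup c (Some a) \<noteq> 0"
  shows "\<exists>b. c = Poly_Mapping.single (Some a) 1 + Poly_Mapping.single (Some b) 1 \<and>
             Poly_Mapping.single None 1 + Poly_Mapping.single (Some b) 1 \<in> edgeM (cone_edges UNIV E)"
proof -
  obtain i j where ij: "c = Poly_Mapping.single i 1 + Poly_Mapping.single j 1" "{i, j} \<in> ((`) Some) ` E"
    using assms(1) unfolding edgeM_def mem_Collect_eq by metis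
  then obtain e where e: "{i, j} = Some ` e" by blast
  have ij_some: "i \<in> range Some" "j \<in> range Some" using e by blast+
  have "i = Some a \<or> j = Some a"
  proof (rule ccontr)
    assume "\<not> (i = Some a \<or> j = Some a)"
    then show False using assms(2) ij(1) by (simp add: lookup_add lookup_single')
  qed
  then obtain k where k: "c = Poly_Mapping.single (Some a) 1 + Poly_Mapping.single k 1" "k \<in> range Some"
    using ij(1) ij_some by (metis add.commute)
  then obtain b where b: "k = Some b" by blast
  have "{None, Some b} \<in> cone_edges UNIV E" unfolding cone_edges_def by (auto simp: insert_commute)
  then have "Poly_Mapping.single None 1 + Poly_Mapping.single (Some b) 1 \<in> edgeM (cone_edges UNIV E)"
    unfolding edgeM_def mem_Collect_eq by blast
  then show ?thesis using k(1) b by blast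
qed

lemma edge_comb:
  fixes E :: "'v set set"
  assumes nd: "\<not> domin (sumsT (edgeM (((`) Some) ` E)) t) u"
    and d: "\<And>i. domin (sumsT (edgeM (((`) Some) ` E)) t) (Poly_Mapping.single (Some i) 1 + u)"
  shows "\<not> domin (sumsT (edgeM (cone_edges UNIV E)) t) (stripN u)
        \<and> (\<forall>x. domin (sumsT (edgeM (cone_edges UNIV E)) t) (Poly_Mapping.single x 1 + stripN u))"
proof -
  let ?G = "edgeM (((`) Some) ` E)" and ?H = "edgeM (cone_edges UNIV E)"
  have strip_dom: "domin (sumsT ?G t) (stripN m)" if dm: "domin (sumsT ?G t) m" for m
  proof -
    obtain as where as: "length as = t" "set as \<subseteq> ?G" "le_pm (sum_list as) m"
      using dm[unfolded domin_sumsT] by blast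
    have "Poly_Mapping.lookup (sum_list as) None = 0"
      unfolding lookup_sum_list using as(2) edgeG_None by (induction as) auto
    then have "le_pm (sum_list as) (stripN m)" using as(3) le_pm_into_strip by blast
    then show ?thesis unfolding domin_sumsT using as(1,2) by blast
  qed
  have su: "Poly_Mapping.lookup (stripN u) None = 0" by (simp add: lookup_strip)
  have ndG: "\<not> domin (sumsT ?G t) (stripN u)" using nd domin_mono le_pm_strip by blast
  have dG: "domin (sumsT ?G t) (Poly_Mapping.single (Some i) 1 + stripN u)" for i
  proof -
    have "domin (sumsT ?G t) (stripN (Poly_Mapping.single (Some i) 1 + u))" using strip_dom d by blast
    moreover have "le_pm (stripN (Poly_Mapping.single (Some i) 1 + u)) (Poly_Mapping.single (Some i) 1 + stripN u)"
      unfolding le_pm_def by (simp add: lookup_strip lookup_add lookup_single')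
    ultimately show ?thesis by (rule domin_mono)
  qed
  have GH: "sumsT ?G t \<subseteq> sumsT ?H t" unfolding sumsT_def using edgeG_sub_H by blast
  have part1: "\<not> domin (sumsT ?H t) (stripN u)"
  proof
    assume "domin (sumsT ?H t) (stripN u)"
    then obtain as where as: "length as = t" "set as \<subseteq> ?H" "le_pm (sum_list as) (stripN u)"
      unfolding domin_sumsT by blast
    have "set as \<subseteq> ?G"
    proof
      fix c assume c: "c \<in> set as"
      have "Poly_Mapping.lookup c None \<le> Poly_Mapping.lookup (sum_list as) None" by (rule elem_le_sum[OF c])
      also have "\<dots> \<le> Poly_Mapping.lookup (stripN u) None" using as(3) unfolding le_pm_def by blast
      finally have "Poly_Mapping.lookup c None = 0" using su by simp
      then show "c \<in> ?G" using edgeH_None c as(2) by blast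
    qed
    then have "domin (sumsT ?G t) (stripN u)" unfolding domin_sumsT using as(1,3) by blast
    then show False using ndG by blast
  qed
  have part2: "domin (sumsT ?H t) (Poly_Mapping.single x 1 + stripN u)" for x
  proof (cases x)
    case (Some i)
    then show ?thesis using dG[of i] GH unfolding domin_def by blast
  next
    case None
    define a :: 'v where "a = undefined"
    obtain as where as: "length as = t" "set as \<subseteq> ?G"
        "le_pm (sum_list as) (Poly_Mapping.single (Some a) 1 + stripN u)"
      using dG[of a, unfolded domin_sumsT] by blast
    have "\<exists>c\<in>set as. Poly_Mapping.lookup c (Some a) \<noteq> 0"
    proof (rule ccontr)
      assume "\<not> (\<exists>c\<in>set as. Poly_Mapping.lookup c (Some a) \<noteq> 0)"
      then have "Poly_Mapping.lookup (sum_list as) (Some a) = 0"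
        unfolding lookup_sum_list by (induction as) auto
      then have "le_pm (sum_list as) (stripN u)" unfolding le_pm_def
      proof (intro allI)
        fix y
        assume z: "Poly_Mapping.lookup (sum_list as) (Some a) = 0"
        show "Poly_Mapping.lookup (sum_list as) y \<le> Poly_Mapping.lookup (stripN u) y"
        proof (cases "y = Some a")
          case True then show ?thesis using z by simp
        next
          case False
          have "Poly_Mapping.lookup (sum_list as) y \<le> Poly_Mapping.lookup (Poly_Mapping.single (Some a) 1 + stripN u) y"
            using as(3) unfolding le_pm_def by blast
          then show ?thesis using False by (simp add: lookup_add lookup_single')
        qed
      qed
      then have "domin (sumsT ?G t) (stripN u)" unfolding domin_sumsT using as(1,2) by blast
      then show False using ndG by blast
    qed
    then obtain c where c: "c \<in> set as" "Poly_Mapping.lookup c (Some a) \<noteq> 0" by blast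
    then obtain b where b: "c = Poly_Mapping.single (Some a) 1 + Poly_Mapping.single (Some b) 1"
        "Poly_Mapping.single None 1 + Poly_Mapping.single (Some b) 1 \<in> ?H"
      using edgeG_at[of c E a] as(2) by blast
    define c' where "c' = Poly_Mapping.single None 1 + Poly_Mapping.single (Some b) (1::nat)"
    define bs where "bs = c' # remove1 c as"
    have "length bs = t" unfolding bs_def using c(1) as(1) by (simp add: length_remove1)
        (metis One_nat_def Suc_pred length_pos_if_in_set)
    moreover have "set bs \<subseteq> ?H"
    proof -
      have "set (remove1 c as) \<subseteq> ?H" using set_remove1_subset[of c as] as(2) edgeG_sub_H by blast
      then show ?thesis unfolding bs_def c'_def using b(2) by simp
    qed
    moreover have "le_pm (sum_list bs) (Poly_Mapping.single x 1 + stripN u)"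
      unfolding le_pm_def
    proof
      fix y
      have h: "Poly_Mapping.lookup c y + Poly_Mapping.lookup (sum_list (remove1 c as)) y
             \<le> Poly_Mapping.lookup (Poly_Mapping.single (Some a) 1 + stripN u) y"
        using as(3) lookup_sum_list_remove1[OF c(1), of y] unfolding le_pm_def by metis
      have "Poly_Mapping.lookup (sum_list bs) y = Poly_Mapping.lookup c' y + Poly_Mapping.lookup (sum_list (remove1 c as)) y"
        unfolding bs_def by (simp add: lookup_add)
      then show "Poly_Mapping.lookup (sum_list bs) y \<le> Poly_Mapping.lookup (Poly_Mapping.single x 1 + stripN u) y"
        using h unfolding b(1) c'_def None by (auto simp: lookup_add lookup_single' split: if_splits)
    qed
    ultimately show ?thesis unfolding domin_sumsT by blast
  qed
  show ?thesis using part1 part2 by blast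
qed


subsection \<open>Cover ideal combinatorics\<close>

lemma covG_iff:
  "c \<in> covM (((`) Some) ` E) \<longleftrightarrow> (\<forall>e\<in>E. \<exists>v\<in>e. 1 \<le> Poly_Mapping.lookup c (Some v))"
  unfolding covM_def by simp

lemma covM_Un: "covM (A \<union> B) = covM A \<inter> covM B"
  unfolding covM_def by auto

lemma covH_iff:
  fixes E :: "'v set set" and c :: "'v option \<Rightarrow>\<^sub>0 nat"
  shows "c \<in> covM (cone_edges UNIV E) \<longleftrightarrow>
     c \<in> covM (((`) Some) ` E) \<and> (\<forall>v. 1 \<le> Poly_Mapping.lookup c (Some v) \<or> 1 \<le> Poly_Mapping.lookup c None)"
proof -
  have "c \<in> covM {{Some v, None} | v. v \<in> UNIV} \<longleftrightarrow>
        (\<forall>v. 1 \<le> Poly_Mapping.lookup c (Some v) \<or> 1 \<le> Poly_Mapping.lookup c None)"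
  proof
    assume h: "c \<in> covM {{Some v, None} | v. v \<in> UNIV}"
    show "\<forall>v. 1 \<le> Poly_Mapping.lookup c (Some v) \<or> 1 \<le> Poly_Mapping.lookup c None"
    proof
      fix v :: 'v
      have "{Some v, None} \<in> {{Some v, None} | v. v \<in> UNIV}" by blast
      then have "\<exists>w\<in>{Some v, None}. 1 \<le> Poly_Mapping.lookup c w" using h unfolding covM_def by blast
      then show "1 \<le> Poly_Mapping.lookup c (Some v) \<or> 1 \<le> Poly_Mapping.lookup c None" by simp
    qed
  next
    assume h: "\<forall>v. 1 \<le> Poly_Mapping.lookup c (Some v) \<or> 1 \<le> Poly_Mapping.lookup c None"
    show "c \<in> covM {{Some v, None} | v. v \<in> UNIV}" unfolding covM_def mem_Collect_eq
    proof
      fix e :: "'v option set" assume "e \<in> {{Some v, None} | v. v \<in> UNIV}"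
      then obtain v where "e = {Some v, None}" by blast
      then show "\<exists>w\<in>e. 1 \<le> Poly_Mapping.lookup c w" using h[rule_format, of v] by auto
    qed
  qed
  moreover have "covM (cone_edges UNIV E) = covM (((`) Some) ` E) \<inter> covM {{Some v, None} | v. v \<in> UNIV}"
    unfolding cone_edges_def by (rule covM_Un)
  ultimately show ?thesis by blast
qed

lemma covG_mono:
  assumes "c \<in> covM (((`) Some) ` E)" "\<And>v. Poly_Mapping.lookup c (Some v) \<le> Poly_Mapping.lookup d (Some v)"
  shows "d \<in> covM (((`) Some) ` E)"
  unfolding covG_iff
proof
  fix e assume "e \<in> E"
  then obtain v where "v \<in> e" "1 \<le> Poly_Mapping.lookup c (Some v)" using assms(1) unfolding covG_iff by blast
  moreover have "Poly_Mapping.lookup c (Some v) \<le> Poly_Mapping.lookup d (Some v)" by (rule assms(2))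
  ultimately show "\<exists>v\<in>e. 1 \<le> Poly_Mapping.lookup d (Some v)" by (meson order_trans)
qed

lemma lookup_sum_strip:
  "Poly_Mapping.lookup (sum_list (map stripN cs)) x = (if x = None then 0 else Poly_Mapping.lookup (sum_list cs) x)"
  by (induction cs) (simp_all add: lookup_add lookup_strip)

lemma domG_intro:
  assumes "length cs = t" "set cs \<subseteq> covM (((`) Some) ` E)"
    "\<And>v. Poly_Mapping.lookup (sum_list cs) (Some v) \<le> Poly_Mapping.lookup m (Some v)"
  shows "domin (sumsT (covM (((`) Some) ` E)) t) m"
proof -
  have "set (map stripN cs) \<subseteq> covM (((`) Some) ` E)"
  proof
    fix d assume "d \<in> set (map stripN cs)"
    then obtain c where c: "c \<in> set cs" "d = stripN c" by auto
    show "d \<in> covM (((`) Some) ` E)"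
      by (rule covG_mono[of c]) (use c assms(2) in \<open>auto simp: lookup_strip\<close>)
  qed
  moreover have "le_pm (sum_list (map stripN cs)) m"
    unfolding le_pm_def lookup_sum_strip
  proof
    fix x show "(if x = None then 0 else Poly_Mapping.lookup (sum_list cs) x) \<le> Poly_Mapping.lookup m x"
      using assms(3) by (cases x) simp_all
  qed
  ultimately show ?thesis unfolding domin_sumsT using assms(1) by (intro exI[of _ "map stripN cs"]) simp
qed

lemma domG_elim:
  assumes "domin (sumsT (covM (((`) Some) ` E)) t) m"
  shows "\<exists>cs. length cs = t \<and> set cs \<subseteq> covM (((`) Some) ` E) \<and> Poly_Mapping.lookup (sum_list cs) None = 0 \<and>
           (\<forall>v. Poly_Mapping.lookup (sum_list cs) (Some v) \<le> Poly_Mapping.lookup m (Some v))"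
proof -
  obtain cs where cs: "length cs = t" "set cs \<subseteq> covM (((`) Some) ` E)" "le_pm (sum_list cs) m"
    using assms[unfolded domin_sumsT] by blast
  have "set (map stripN cs) \<subseteq> covM (((`) Some) ` E)"
  proof
    fix d assume "d \<in> set (map stripN cs)"
    then obtain c where c: "c \<in> set cs" "d = stripN c" by auto
    show "d \<in> covM (((`) Some) ` E)"
      by (rule covG_mono[of c]) (use c cs(2) in \<open>auto simp: lookup_strip\<close>)
  qed
  moreover have "Poly_Mapping.lookup (sum_list (map stripN cs)) None = 0" by (simp add: lookup_sum_strip)
  moreover have "\<forall>v. Poly_Mapping.lookup (sum_list (map stripN cs)) (Some v) \<le> Poly_Mapping.lookup m (Some v)"
    using cs(3) unfolding le_pm_def lookup_sum_strip by simp
  ultimately show ?thesis using cs(1) by (intro exI[of _ "map stripN cs"]) simp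
qed

definition xS :: "'v set \<Rightarrow> ('v option \<Rightarrow>\<^sub>0 nat)" where
  "xS A = (\<Sum>v\<in>A. Poly_Mapping.single (Some v) 1)"

lemma lookup_xS_None: "Poly_Mapping.lookup (xS A) None = 0"
  unfolding xS_def lookup_sum by (simp add: lookup_single')

lemma lookup_xS_Some: "finite A \<Longrightarrow> Poly_Mapping.lookup (xS A) (Some w) = (if w \<in> A then 1 else 0)"
  unfolding xS_def lookup_sum by (simp add: lookup_single')

lemma lookup_map_add:
  "Poly_Mapping.lookup (sum_list (map (\<lambda>c. c + d) cs)) x =
     Poly_Mapping.lookup (sum_list cs) x + length cs * Poly_Mapping.lookup (d :: ('a \<Rightarrow>\<^sub>0 nat)) x"
  by (induction cs) (simp_all add: lookup_add)

lemma length_le_sum: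
  "(\<And>d. d \<in> set ds \<Longrightarrow> 1 \<le> Poly_Mapping.lookup d x) \<Longrightarrow> length ds \<le> Poly_Mapping.lookup (sum_list (ds :: ('a \<Rightarrow>\<^sub>0 nat) list)) x"
proof (induction ds)
  case Nil then show ?case by simp
next
  case (Cons d ds)
  then have "1 \<le> Poly_Mapping.lookup d x" "length ds \<le> Poly_Mapping.lookup (sum_list ds) x" by auto
  then show ?case by (simp add: lookup_add)
qed

lemma cover_comb:
  fixes E :: "'v set set"
  assumes fin: "finite (UNIV :: 'v set)" and card2: "\<And>e. e \<in> E \<Longrightarrow> card e = 2"
    and nd: "\<not> domin (sumsT (covM (((`) Some) ` E)) t) u"
    and d: "\<And>i. domin (sumsT (covM (((`) Some) ` E)) t) (Poly_Mapping.single (Some i) 1 + u)"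
  defines "u' \<equiv> Poly_Mapping.single None t + xS UNIV + stripN u"
  shows "\<not> domin (sumsT (covM (cone_edges UNIV E)) (t + 1)) u'
        \<and> (\<forall>x. domin (sumsT (covM (cone_edges UNIV E)) (t + 1)) (Poly_Mapping.single x 1 + u'))"
proof -
  let ?G = "covM (((`) Some) ` E)" and ?H = "covM (cone_edges UNIV E)"
  have u'_None: "Poly_Mapping.lookup u' None = t"
    unfolding u'_def by (simp add: lookup_add lookup_xS_None lookup_strip)
  have u'_Some: "Poly_Mapping.lookup u' (Some v) = 1 + Poly_Mapping.lookup u (Some v)" for v
    unfolding u'_def by (simp add: lookup_add lookup_xS_Some[OF fin] lookup_strip lookup_single')
  have H: "\<exists>cs. length cs = t \<and> set cs \<subseteq> ?G \<and> Poly_Mapping.lookup (sum_list cs) None = 0 \<and>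
           (\<forall>v. Poly_Mapping.lookup (sum_list cs) (Some v) \<le> (if i = v then 1 else 0) + Poly_Mapping.lookup u (Some v))" for i
    using domG_elim[OF d[of i]] by (simp only: lookup_add lookup_single' option.inject)
  have cH1: "c + Poly_Mapping.single None 1 \<in> ?H" if "c \<in> ?G" for c
    unfolding covH_iff
  proof
    show "c + Poly_Mapping.single None 1 \<in> ?G" by (rule covG_mono[OF that]) (simp add: lookup_add)
    show "\<forall>v. 1 \<le> Poly_Mapping.lookup (c + Poly_Mapping.single None 1) (Some v) \<or>
              1 \<le> Poly_Mapping.lookup (c + Poly_Mapping.single None 1) None"
      by (simp add: lookup_add)
  qed
  have cH2: "xS UNIV \<in> ?H"
    unfolding covH_iff covG_iff
  proof
    show "\<forall>e\<in>E. \<exists>v\<in>e. 1 \<le> Poly_Mapping.lookup (xS UNIV) (Some v)"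
    proof
      fix e assume "e \<in> E"
      then have "card e = 2" by (rule card2)
      then obtain v where "v \<in> e" by (metis card.empty ex_in_conv zero_neq_numeral)
      then show "\<exists>v\<in>e. 1 \<le> Poly_Mapping.lookup (xS UNIV) (Some v)" by (auto simp: lookup_xS_Some[OF fin])
    qed
    show "\<forall>v. 1 \<le> Poly_Mapping.lookup (xS UNIV) (Some (v::'v)) \<or> 1 \<le> Poly_Mapping.lookup (xS UNIV) None"
    proof
      fix v :: 'v
      have "Poly_Mapping.lookup (xS UNIV) (Some v) = 1" using lookup_xS_Some[OF fin, of v] by simp
      then show "1 \<le> Poly_Mapping.lookup (xS UNIV) (Some v) \<or> 1 \<le> Poly_Mapping.lookup (xS UNIV) None" by simp
    qed
  qed
  have cH3: "xS (UNIV - {a}) + Poly_Mapping.single None 1 \<in> ?H" for a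
    unfolding covH_iff covG_iff
  proof
    show "\<forall>e\<in>E. \<exists>v\<in>e. 1 \<le> Poly_Mapping.lookup (xS (UNIV - {a}) + Poly_Mapping.single None 1) (Some v)"
    proof
      fix e assume "e \<in> E"
      then have "card e = 2" by (rule card2)
      then obtain x y where xy: "x \<noteq> y" "e = {x, y}" by (meson card_2_iff)
      then obtain v where "v \<in> e" "v \<noteq> a" by blast
      then show "\<exists>v\<in>e. 1 \<le> Poly_Mapping.lookup (xS (UNIV - {a}) + Poly_Mapping.single None 1) (Some v)"
        using fin by (auto simp: lookup_add lookup_xS_Some lookup_single')
    qed
    show "\<forall>v. 1 \<le> Poly_Mapping.lookup (xS (UNIV - {a}) + Poly_Mapping.single None 1) (Some v) \<or>
              1 \<le> Poly_Mapping.lookup (xS (UNIV - {a}) + Poly_Mapping.single None 1) None"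
      by (simp add: lookup_add)
  qed
  have part2: "domin (sumsT ?H (t + 1)) (Poly_Mapping.single x 1 + u')" for x
  proof (cases x)
    case (Some i)
    obtain cs where cs: "length cs = t" "set cs \<subseteq> ?G" "Poly_Mapping.lookup (sum_list cs) None = 0"
      "\<And>v. Poly_Mapping.lookup (sum_list cs) (Some v) \<le> (if i = v then 1 else 0) + Poly_Mapping.lookup u (Some v)"
      using H[of i] by blast
    define ds where "ds = map (\<lambda>c. c + Poly_Mapping.single None 1) cs @ [xS UNIV]"
    have "length ds = t + 1" unfolding ds_def using cs(1) by simp
    moreover have "set ds \<subseteq> ?H" unfolding ds_def using cs(2) cH1 cH2 by auto
    moreover have "le_pm (sum_list ds) (Poly_Mapping.single x 1 + u')"
      unfolding le_pm_def
    proof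
      fix y
      have eq: "Poly_Mapping.lookup (sum_list ds) y = Poly_Mapping.lookup (sum_list cs) y
          + t * Poly_Mapping.lookup (Poly_Mapping.single None (1::nat)) y + Poly_Mapping.lookup (xS UNIV) y"
        unfolding ds_def by (simp add: lookup_add lookup_map_add cs(1))
      show "Poly_Mapping.lookup (sum_list ds) y \<le> Poly_Mapping.lookup (Poly_Mapping.single x 1 + u') y"
      proof (cases y)
        case None
        then show ?thesis unfolding eq using cs(3) u'_None Some
          by (simp add: lookup_add lookup_single' lookup_xS_None)
      next
        case (Some v)
        then show ?thesis unfolding eq using cs(4)[of v] u'_Some[of v] \<open>x = Some i\<close>
          by (simp add: lookup_add lookup_single' lookup_xS_Some[OF fin] split: if_splits)
      qed
    qed
    ultimately show ?thesis unfolding domin_sumsT by blast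
  next
    case None
    define a :: 'v where "a = undefined"
    obtain cs where cs: "length cs = t" "set cs \<subseteq> ?G" "Poly_Mapping.lookup (sum_list cs) None = 0"
      "\<And>v. Poly_Mapping.lookup (sum_list cs) (Some v) \<le> (if a = v then 1 else 0) + Poly_Mapping.lookup u (Some v)"
      using H[of a] by blast
    define ds where "ds = map (\<lambda>c. c + Poly_Mapping.single None 1) cs @ [xS (UNIV - {a}) + Poly_Mapping.single None 1]"
    have "length ds = t + 1" unfolding ds_def using cs(1) by simp
    moreover have "set ds \<subseteq> ?H" unfolding ds_def using cs(2) cH1 cH3 by auto
    moreover have "le_pm (sum_list ds) (Poly_Mapping.single x 1 + u')"
      unfolding le_pm_def
    proof
      fix y
      have eq: "Poly_Mapping.lookup (sum_list ds) y = Poly_Mapping.lookup (sum_list cs) y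
          + t * Poly_Mapping.lookup (Poly_Mapping.single None (1::nat)) y + Poly_Mapping.lookup (xS (UNIV - {a})) y
          + Poly_Mapping.lookup (Poly_Mapping.single None (1::nat)) y"
        unfolding ds_def by (simp add: lookup_add lookup_map_add cs(1))
      show "Poly_Mapping.lookup (sum_list ds) y \<le> Poly_Mapping.lookup (Poly_Mapping.single x 1 + u') y"
      proof (cases y)
        case None
        then show ?thesis unfolding eq using cs(3) u'_None \<open>x = None\<close>
          by (simp add: lookup_add lookup_single' lookup_xS_None)
      next
        case (Some v)
        have "finite (UNIV - {a})" using fin by simp
        then show ?thesis unfolding eq using cs(4)[of v] u'_Some[of v] \<open>x = None\<close> Some
          by (simp add: lookup_add lookup_single' lookup_xS_Some split: if_splits)
      qed
    qed
    ultimately show ?thesis unfolding domin_sumsT by blast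
  qed
  have part1: "\<not> domin (sumsT ?H (t + 1)) u'"
  proof
    assume "domin (sumsT ?H (t + 1)) u'"
    then obtain ds where ds: "length ds = t + 1" "set ds \<subseteq> ?H" "le_pm (sum_list ds) u'"
      unfolding domin_sumsT by blast
    have "\<exists>d0\<in>set ds. Poly_Mapping.lookup d0 None = 0"
    proof (rule ccontr)
      assume nz: "\<not> (\<exists>d0\<in>set ds. Poly_Mapping.lookup d0 None = 0)"
      have "1 \<le> Poly_Mapping.lookup dd None" if dd: "dd \<in> set ds" for dd :: "'v option \<Rightarrow>\<^sub>0 nat"
      proof -
        have "Poly_Mapping.lookup dd None \<noteq> 0"
        proof
          assume "Poly_Mapping.lookup dd None = 0"
          with dd have "\<exists>d0\<in>set ds. Poly_Mapping.lookup d0 None = 0" by blast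
          then show False by (rule notE[OF nz])
        qed
        then show ?thesis by simp
      qed
      then have "length ds \<le> Poly_Mapping.lookup (sum_list ds) None"
        by (rule length_le_sum)
      moreover have "Poly_Mapping.lookup (sum_list ds) None \<le> Poly_Mapping.lookup u' None"
        using ds(3) unfolding le_pm_def by blast
      then have "Poly_Mapping.lookup (sum_list ds) None \<le> t" using u'_None by simp
      ultimately show False using ds(1) by simp
    qed
    then obtain d0 where d0: "d0 \<in> set ds" "Poly_Mapping.lookup d0 None = 0" by blast
    have d0H: "d0 \<in> ?H" using d0(1) ds(2) by blast
    have d0S: "1 \<le> Poly_Mapping.lookup d0 (Some v)" for v
    proof -
      have "1 \<le> Poly_Mapping.lookup d0 (Some v) \<or> 1 \<le> Poly_Mapping.lookup d0 None"
        using d0H unfolding covH_iff by blast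
      then show ?thesis using d0(2) by simp
    qed
    define rest where "rest = remove1 d0 ds"
    have "length rest = t" unfolding rest_def using d0(1) ds(1) by (simp add: length_remove1)
    moreover have "set rest \<subseteq> ?G"
    proof
      fix c assume "c \<in> set rest"
      then have "c \<in> set ds" unfolding rest_def using set_remove1_subset[of d0 ds] by blast
      then have "c \<in> ?H" using ds(2) by blast
      then show "c \<in> ?G" unfolding covH_iff by blast
    qed
    moreover have "Poly_Mapping.lookup (sum_list rest) (Some v) \<le> Poly_Mapping.lookup u (Some v)" for v
    proof -
      have "Poly_Mapping.lookup (sum_list ds) (Some v) = Poly_Mapping.lookup d0 (Some v) + Poly_Mapping.lookup (sum_list rest) (Some v)"
        unfolding rest_def by (rule lookup_sum_list_remove1[OF d0(1)])
      moreover have "Poly_Mapping.lookup (sum_list ds) (Some v) \<le> Poly_Mapping.lookup u' (Some v)"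
        using ds(3) unfolding le_pm_def by blast
      ultimately show ?thesis using d0S[of v] u'_Some[of v] by simp
    qed
    ultimately have "domin (sumsT ?G t) u" by (rule domG_intro)
    then show False using nd by blast
  qed
  show ?thesis using part1 part2 by blast
qed

theorem lemma3p5:
  fixes E :: "'v set set" and t :: nat
  assumes "simple_graph (UNIV :: 'v set) E"
    and "connected_graph (UNIV :: 'v set) E"
  shows "(t \<ge> 1 \<and>
           (var_prime (range Some) :: ('v option, 'k::field) mpoly set)
             \<in> Ass (ideal_pow (cover_ideal (((`) Some) ` E)) t)
         \<longrightarrow> (var_prime UNIV :: ('v option, 'k) mpoly set)
             \<in> Ass (ideal_pow (cover_ideal (cone_edges UNIV E)) (t + 1)))
       \<and> (t \<ge> 2 \<and>
           (var_prime (range Some) :: ('v option, 'k) mpoly set)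
             \<in> Ass (ideal_pow (edge_ideal (((`) Some) ` E)) t)
         \<longrightarrow> (var_prime UNIV :: ('v option, 'k) mpoly set)
             \<in> Ass (ideal_pow (edge_ideal (cone_edges UNIV E)) t))"
proof -
  have fin: "finite (UNIV :: 'v set)" and card2: "\<And>e. e \<in> E \<Longrightarrow> card e = 2"
    using assms(1) unfolding simple_graph_def by auto
  have partI: "t \<ge> 1 \<and>
           (var_prime (range Some) :: ('v option, 'k::field) mpoly set)
             \<in> Ass (ideal_pow (cover_ideal (((`) Some) ` E)) t)
         \<longrightarrow> (var_prime UNIV :: ('v option, 'k) mpoly set)
             \<in> Ass (ideal_pow (cover_ideal (cone_edges UNIV E)) (t + 1))"
  proof
    assume h: "t \<ge> 1 \<and>
           (var_prime (range Some) :: ('v option, 'k::field) mpoly set)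
             \<in> Ass (ideal_pow (cover_ideal (((`) Some) ` E)) t)"
    then have "(var_prime (range Some) :: ('v option, 'k::field) mpoly set)
             \<in> Ass (MI (sumsT (covM (((`) Some) ` E)) t))"
      unfolding cover_ideal_MI ideal_pow_MI by blast
    then obtain u where u: "\<not> domin (sumsT (covM (((`) Some) ` E)) t) u"
      "\<forall>i. domin (sumsT (covM (((`) Some) ` E)) t) (Poly_Mapping.single (Some i) 1 + u)"
      using ass_extract by blast
    define u' where "u' = Poly_Mapping.single None t + xS UNIV + stripN u"
    have c: "\<not> domin (sumsT (covM (cone_edges UNIV E)) (t + 1)) u'
        \<and> (\<forall>x. domin (sumsT (covM (cone_edges UNIV E)) (t + 1)) (Poly_Mapping.single x 1 + u'))"
      unfolding u'_def by (rule cover_comb[OF fin card2 u(1) u(2)[rule_format]])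
    have "(var_prime UNIV :: ('v option, 'k) mpoly set) \<in> Ass (MI (sumsT (covM (cone_edges UNIV E)) (t + 1)))"
      using c by (intro ass_intro_MI[of _ u']) auto
    then show "(var_prime UNIV :: ('v option, 'k) mpoly set)
             \<in> Ass (ideal_pow (cover_ideal (cone_edges UNIV E)) (t + 1))"
      unfolding cover_ideal_MI ideal_pow_MI .
  qed
  have partII: "t \<ge> 2 \<and>
           (var_prime (range Some) :: ('v option, 'k) mpoly set)
             \<in> Ass (ideal_pow (edge_ideal (((`) Some) ` E)) t)
         \<longrightarrow> (var_prime UNIV :: ('v option, 'k) mpoly set)
             \<in> Ass (ideal_pow (edge_ideal (cone_edges UNIV E)) t)"
  proof
    assume h: "t \<ge> 2 \<and>
           (var_prime (range Some) :: ('v option, 'k) mpoly set)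
             \<in> Ass (ideal_pow (edge_ideal (((`) Some) ` E)) t)"
    then have "(var_prime (range Some) :: ('v option, 'k::field) mpoly set)
             \<in> Ass (MI (sumsT (edgeM (((`) Some) ` E)) t))"
      unfolding edge_ideal_MI ideal_pow_MI by blast
    then obtain u where u: "\<not> domin (sumsT (edgeM (((`) Some) ` E)) t) u"
      "\<forall>i. domin (sumsT (edgeM (((`) Some) ` E)) t) (Poly_Mapping.single (Some i) 1 + u)"
      using ass_extract by blast
    have c: "\<not> domin (sumsT (edgeM (cone_edges UNIV E)) t) (stripN u)
        \<and> (\<forall>x. domin (sumsT (edgeM (cone_edges UNIV E)) t) (Poly_Mapping.single x 1 + stripN u))"
      by (rule edge_comb[OF u(1) u(2)[rule_format]])
    have "(var_prime UNIV :: ('v option, 'k) mpoly set) \<in> Ass (MI (sumsT (edgeM (cone_edges UNIV E)) t))"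
      using c by (intro ass_intro_MI[of _ "stripN u"]) auto
    then show "(var_prime UNIV :: ('v option, 'k) mpoly set)
             \<in> Ass (ideal_pow (edge_ideal (cone_edges UNIV E)) t)"
      unfolding edge_ideal_MI ideal_pow_MI .
  qed
  show ?thesis using partI partII by blast
qed

end
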